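(* Let $q$ be a prime power, let $\mathcal{F}=(\mathcal{F}_1,\ldots,\mathcal{F}_r)$ be a flag on $\mathbb{F}_{q^n}$ and let $\beta\in\mathbb{F}_{q^n}^*$. Assume the subfield $\mathbb{F}_{q^m}$ is the best friend of $\mathcal{F}$. Then $$|\mathrm{Orb}_\beta(\mathcal{F})|=\frac{|\beta|}{|\langle\beta\rangle\cap\mathbb{F}_{q^m}^*|}.$$ In particular, if $\beta$ is a primitive element of $\mathbb{F}_{q^n}$, then $|\mathrm{Orb}(\mathcal{F})|=\frac{q^n-1}{q^m-1}$.
   Context: A flag on $\mathbb{F}_{q^n}$ is a sequence $(\mathcal{F}_1,\ldots,\mathcal{F}_r)$ of $\mathbb{F}_q$-subspaces with $\{0\}\subsetneq\mathcal{F}_1\subsetneq\cdots\subsetneq\mathcal{F}_r\subsetneq\mathbb{F}_{q^n}$. For $\gamma\in\mathbb{F}_{q^n}^*$, $\mathcal{F}\gamma=(\mathcal{F}_1\gamma,\ldots,\mathcal{F}_r\gamma)$ with $\mathcal{U}\gamma=\{u\gamma:u\in\mathcal{U}\}$. For $\beta\in\mathbb{F}_{q^n}^*$ of multiplicative order $|\beta|$, $\mathrm{Orb}_\beta(\mathcal{F})=\{\mathcal{F}\beta^j:0\le j\le|\beta|-1\}$; $\mathrm{Orb}(\mathcal{F})=\{\mathcal{F}\gamma:\gamma\in\mathbb{F}_{q^n}^*\}$. A subfield $\mathbb{F}_{q^m}$ is a friend of $\mathcal{F}$ if every $\mathcal{F}_i$ is an $\mathbb{F}_{q^m}$-vector space;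 the best friend is the largest friend. *)

theory Defs
  imports Complex_Main "HOL-Computational_Algebra.Primes"
begin

text \<open>Ambient field: a finite field type 'a with card UNIV = q^n.
  The subfield of order k (for k = q^m, m dividing n) is {x. x^k = x}.\<close>

definition subfield_of_order :: "nat \<Rightarrow> 'a::{field,finite} set" where
  "subfield_of_order k = {x. x ^ k = x}"

definition is_subspace_over :: "nat \<Rightarrow> 'a::{field,finite} set \<Rightarrow> bool" where
  "is_subspace_over k U \<longleftrightarrow> 0 \<in> U \<and> (\<forall>x\<in>U. \<forall>y\<in>U. x + y \<in> U)
     \<and> (\<forall>c\<in>subfield_of_order k. \<forall>x\<in>U. c * x \<in> U)"

definition is_flag :: "nat \<Rightarrow> 'a::{field,finite} set list \<Rightarrow> bool" where
  "is_flag q F \<longleftrightarrow> (\<forall>U\<in>set F. is_subspace_over q U)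
     \<and> (F \<noteq> [] \<longrightarrow> {0} \<subset> hd F \<and> last F \<subset> UNIV)
     \<and> (\<forall>i. Suc i < length F \<longrightarrow> F ! i \<subset> F ! Suc i)"

definition flag_mult :: "'a::{field,finite} set list \<Rightarrow> 'a \<Rightarrow> 'a set list" where
  "flag_mult F \<gamma> = map (\<lambda>U. (\<lambda>u. u * \<gamma>) ` U) F"

definition mult_order :: "'a::{field,finite} \<Rightarrow> nat" where
  "mult_order \<beta> = (LEAST k. 0 < k \<and> \<beta> ^ k = 1)"

definition orbit_beta :: "'a::{field,finite} \<Rightarrow> 'a set list \<Rightarrow> 'a set list set" where
  "orbit_beta \<beta> F = {flag_mult F (\<beta> ^ j) | j. j < mult_order \<beta>}"

definition orbit_full :: "'a::{field,finite} set list \<Rightarrow> 'a set list set" where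
  "orbit_full F = {flag_mult F \<gamma> | \<gamma>. \<gamma> \<noteq> 0}"

definition is_friend :: "nat \<Rightarrow> nat \<Rightarrow> 'a::{field,finite} set list \<Rightarrow> nat \<Rightarrow> bool" where
  "is_friend q n F m \<longleftrightarrow> 0 < m \<and> m dvd n \<and> (\<forall>U\<in>set F. is_subspace_over (q ^ m) U)"

definition is_best_friend :: "nat \<Rightarrow> nat \<Rightarrow> 'a::{field,finite} set list \<Rightarrow> nat \<Rightarrow> bool" where
  "is_best_friend q n F m \<longleftrightarrow> is_friend q n F m \<and> (\<forall>m'. is_friend q n F m' \<longrightarrow> m' \<le> m)"

definition cyclic_subgroup :: "'a::{field,finite} \<Rightarrow> 'a set" where
  "cyclic_subgroup \<beta> = {\<beta> ^ j | j. True}"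

end

theory Submission imports Defs "HOL-Computational_Algebra.Polynomial" begin

lemma of_nat_card_zero: "of_nat (card (UNIV :: 'a::{field,finite} set)) = (0::'a)"
proof -
  have "(\<Sum>y\<in>(UNIV::'a set). 1 + y) = (\<Sum>y\<in>UNIV. y)"
    by (rule sum.reindex_bij_witness[of _ "\<lambda>y. y - 1" "\<lambda>y. 1 + y"]) auto
  thus ?thesis by (simp add: sum.distrib)
qed

lemma CHAR_eq_prime:
  assumes "prime p" "card (UNIV :: 'a::{field,finite} set) = p ^ e"
  shows "CHAR('a) = p"
proof -
  have pc: "prime CHAR('a)"
    using prime_CHAR_semidom[where ?'a = 'a] finite_imp_CHAR_pos[where ?'a='a] by auto
  have "CHAR('a) dvd p ^ e" using of_nat_card_zero[where ?'a='a] assms(2)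
    by (metis of_nat_eq_0_iff_char_dvd)
  hence "CHAR('a) dvd p" using pc prime_dvd_power by blast
  thus ?thesis using pc assms(1) by (simp add: primes_dvd_imp_eq)
qed

lemma pow_card_one:
  fixes x :: "'a::field"
  assumes "finite G" "0 \<notin> G" "x \<in> G" "\<And>y. y \<in> G \<Longrightarrow> x * y \<in> G" "\<And>y. y \<in> G \<Longrightarrow> y / x \<in> G"
  shows "x ^ card G = 1"
proof -
  have x0: "x \<noteq> 0" using assms by auto
  have "(\<Prod>y\<in>G. x * y) = (\<Prod>y\<in>G. y)"
    by (rule prod.reindex_bij_witness[of _ "\<lambda>y. y / x" "\<lambda>y. x * y"]) (use assms x0 in auto)
  hence "x ^ card G * (\<Prod>y\<in>G. y) = 1 * (\<Prod>y\<in>G. y)" by (simp add: prod.distrib)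
  moreover have "(\<Prod>y\<in>G. y) \<noteq> 0" using assms by auto
  ultimately show ?thesis by simp
qed

lemma deg_xk_minus1:
  assumes "k > 0"
  shows "degree ([:0,1:]^k - 1 :: 'a::field poly) = k"
proof -
  have "degree ([:0,1:]^k :: 'a poly) = k" by (simp add: degree_power_eq)
  moreover have "degree (1::'a poly) = 0" by simp
  ultimately have "degree (-1::'a poly) < degree ([:0,1:]^k :: 'a poly)" using assms by simp
  hence "degree ([:0,1:]^k + (-1) :: 'a poly) = k" using degree_add_eq_left \<open>degree ([:0,1:]^k :: 'a poly) = k\<close> by metis
  thus ?thesis by simp
qed

lemma card_roots_sub:
  fixes R N :: nat
  assumes N: "card (UNIV :: 'a::{field,finite} set) = N"
    and all: "\<And>x::'a. x \<noteq> 0 \<Longrightarrow> x ^ (N - 1) = 1"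
    and R: "2 \<le> R" "R \<le> N" "(R - 1) dvd (N - 1)"
  shows "card {x::'a. x ^ (R - 1) = 1} = R - 1"
proof -
  obtain d where d: "N - 1 = (R - 1) * d" using R by (auto elim: dvdE)
  define p1 :: "'a poly" where "p1 = [:0,1:]^(R-1) - 1"
  define p2 :: "'a poly" where "p2 = [:0,1:]^(N-1) - 1"
  have "p2 = ([:0,1:]^(R-1))^d - 1" unfolding p2_def d by (simp add: power_mult)
  also have "\<dots> = p1 * (\<Sum>i<d. ([:0,1:]^(R-1))^i)" unfolding p1_def by (rule power_diff_1_eq)
  finally obtain h where h: "p2 = p1 * h" by blast
  have dp1: "degree p1 = R - 1" unfolding p1_def using R by (intro deg_xk_minus1) auto
  have dp2: "degree p2 = N - 1" unfolding p2_def using R by (intro deg_xk_minus1) auto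
  have p1nz: "p1 \<noteq> 0" using dp1 R by auto
  have p2nz: "p2 \<noteq> 0" using dp2 R by auto
  have hnz: "h \<noteq> 0" using h p2nz by auto
  have dh: "degree h = N - R" using degree_mult_eq[OF p1nz hnz] h dp1 dp2 R by simp
  have r1: "{x::'a. x ^ (R - 1) = 1} = {x. poly p1 x = 0}" unfolding p1_def by auto
  have c1: "card {x. poly p1 x = 0} \<le> R - 1" using card_poly_roots_bound[OF p1nz] dp1 by simp
  have c2: "card {x. poly h x = 0} \<le> N - R" using card_poly_roots_bound[OF hnz] dh by simp
  have sub: "UNIV - {0} \<subseteq> {x. poly p1 x = 0} \<union> {x. poly h x = 0}"
  proof
    fix x :: 'a assume "x \<in> UNIV - {0}"
    hence "poly p2 x = 0" using all unfolding p2_def by auto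
    thus "x \<in> {x. poly p1 x = 0} \<union> {x. poly h x = 0}" using h by auto
  qed
  have "N - 1 = card (UNIV - {0::'a})" using N by (simp add: card_Diff_subset)
  also have "\<dots> \<le> card ({x. poly p1 x = 0} \<union> {x. poly h x = 0})"
    by (intro card_mono sub) auto
  also have "\<dots> \<le> card {x. poly p1 x = 0} + card {x. poly h x = 0}" by (rule card_Un_le)
  finally have "N - 1 \<le> card {x. poly p1 x = 0} + (N - R)" using c2 by linarith
  hence "card {x. poly p1 x = 0} \<ge> R - 1" using R by linarith
  thus ?thesis using c1 r1 by simp
qed


definition subsp :: "'a::field set \<Rightarrow> 'a set \<Rightarrow> bool" where
  "subsp A V \<longleftrightarrow> 0 \<in> V \<and> (\<forall>x\<in>V. \<forall>y\<in>V. x + y \<in> V) \<and> (\<forall>x\<in>V. \<forall>y\<in>V. x - y \<in> V)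
     \<and> (\<forall>a\<in>A. \<forall>x\<in>V. a * x \<in> V)"

lemma card_module_step:
  fixes A V :: "'a::{field,finite} set"
  assumes A: "0 \<in> A" "1 \<in> A" "\<forall>a\<in>A. \<forall>b\<in>A. a + b \<in> A" "\<forall>a\<in>A. \<forall>b\<in>A. a - b \<in> A"
     "\<forall>a\<in>A. \<forall>b\<in>A. a * b \<in> A" "\<forall>a\<in>A. a \<noteq> 0 \<longrightarrow> inverse a \<in> A"
    and V: "subsp A V" and y: "y \<notin> V"
  shows "subsp A {v + a * y | v a. v \<in> V \<and> a \<in> A}" (is "subsp A ?W")
    and "card {v + a * y | v a. v \<in> V \<and> a \<in> A} = card V * card A"
    and "V \<subseteq> {v + a * y | v a. v \<in> V \<and> a \<in> A}"
    and "y \<in> {v + a * y | v a. v \<in> V \<and> a \<in> A}"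
proof -
  have V0: "0 \<in> V" and Vadd: "\<forall>x\<in>V. \<forall>y\<in>V. x + y \<in> V" and Vsub: "\<forall>x\<in>V. \<forall>y\<in>V. x - y \<in> V"
    and Vmul: "\<forall>a\<in>A. \<forall>x\<in>V. a * x \<in> V" using V unfolding subsp_def by auto
  show "subsp A ?W" unfolding subsp_def
  proof (intro conjI ballI)
    show "0 \<in> ?W" using V0 A by (auto intro!: exI[of _ 0])
  next
    fix x z assume "x \<in> ?W" "z \<in> ?W"
    then obtain v1 a1 v2 a2 where "x = v1 + a1 * y" "z = v2 + a2 * y" "v1 \<in> V" "a1 \<in> A" "v2 \<in> V" "a2 \<in> A" by blast
    hence "x + z = (v1 + v2) + (a1 + a2) * y" "x - z = (v1 - v2) + (a1 - a2) * y"
      by (simp_all add: algebra_simps)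
    moreover have "v1 + v2 \<in> V" "v1 - v2 \<in> V" "a1 + a2 \<in> A" "a1 - a2 \<in> A"
      using Vadd Vsub A \<open>v1 \<in> V\<close> \<open>v2 \<in> V\<close> \<open>a1 \<in> A\<close> \<open>a2 \<in> A\<close> by auto
    ultimately show "x + z \<in> ?W" "x - z \<in> ?W" by blast+
  next
    fix c x assume "c \<in> A" "x \<in> ?W"
    then obtain v1 a1 where "x = v1 + a1 * y" "v1 \<in> V" "a1 \<in> A" by blast
    hence "c * x = (c * v1) + (c * a1) * y" by (simp add: algebra_simps)
    moreover have "c * v1 \<in> V" "c * a1 \<in> A" using Vmul A \<open>c \<in> A\<close> \<open>v1 \<in> V\<close> \<open>a1 \<in> A\<close> by auto
    ultimately show "c * x \<in> ?W" by blast
  qed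
  have eq: "?W = (\<lambda>(v, a). v + a * y) ` (V \<times> A)" by auto
  have inj: "inj_on (\<lambda>(v, a). v + a * y) (V \<times> A)"
  proof (rule inj_onI, clarify)
    fix v a v' a' assume h: "v \<in> V" "a \<in> A" "v' \<in> V" "a' \<in> A" "v + a * y = v' + a' * y"
    show "v = v' \<and> a = a'"
    proof (cases "a = a'")
      case True thus ?thesis using h by simp
    next
      case False
      hence "(a - a') * y = v' - v" using h(5) by (simp add: algebra_simps)
      hence "y = inverse (a - a') * (v' - v)" using False by (simp add: field_simps)
      moreover have "inverse (a - a') \<in> A" using A h False by auto
      ultimately have "y \<in> V" using Vmul Vsub h by auto
      thus ?thesis using y by simp
    qed
  qed
  show "card ?W = card V * card A" unfolding eq
    by (simp add: card_image[OF inj] card_cartesian_product)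
  show "V \<subseteq> ?W"
  proof
    fix x assume "x \<in> V"
    hence "x = x + 0 * y \<and> x \<in> V \<and> 0 \<in> A" using A by simp
    thus "x \<in> ?W" by blast
  qed
  have "y = 0 + 1 * y \<and> 0 \<in> V \<and> 1 \<in> A" using A V0 by simp
  thus "y \<in> ?W" by blast
qed

lemma card_module_power:
  fixes A B :: "'a::{field,finite} set"
  assumes A: "0 \<in> A" "1 \<in> A" "\<forall>a\<in>A. \<forall>b\<in>A. a + b \<in> A" "\<forall>a\<in>A. \<forall>b\<in>A. a - b \<in> A"
     "\<forall>a\<in>A. \<forall>b\<in>A. a * b \<in> A" "\<forall>a\<in>A. a \<noteq> 0 \<longrightarrow> inverse a \<in> A"
    and B: "subsp A B"
  shows "\<exists>d. card B = card A ^ d"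
proof -
  have main: "\<And>V. card B - card V = k \<Longrightarrow> subsp A V \<Longrightarrow> V \<subseteq> B \<Longrightarrow> card V = card A ^ j \<Longrightarrow> \<exists>d. card B = card A ^ d" for k j
  proof (induction k arbitrary: j rule: less_induct)
    case (less k V j)
    show ?case
    proof (cases "V = B")
      case True thus ?thesis using less by auto
    next
      case False
      then obtain y where y: "y \<in> B" "y \<notin> V" using less by auto
      let ?W = "{v + a * y | v a. v \<in> V \<and> a \<in> A}"
      note st = card_module_step[OF A less(3) y(2)]
      have WB: "?W \<subseteq> B"
      proof
        fix x assume "x \<in> ?W"
        then obtain v a where "x = v + a * y" "v \<in> V" "a \<in> A" by blast
        thus "x \<in> B" using B y less(4) unfolding subsp_def by blast
      qed
      have "V \<subset> ?W" using st(3,4) y by auto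
      hence "card V < card ?W" by (intro psubset_card_mono) auto
      moreover have "card ?W \<le> card B" by (intro card_mono WB) auto
      ultimately have "card B - card ?W < k" using less(2) by linarith
      moreover have "card ?W = card A ^ Suc j" using st(2) less(5) by simp
      ultimately show ?thesis using less(1) st(1) WB by blast
    qed
  qed
  have "subsp A {0}" unfolding subsp_def by auto
  moreover have "{0} \<subseteq> B" using B unfolding subsp_def by auto
  ultimately show ?thesis by (intro main[OF refl, of "{0}" 0]) auto
qed


lemma nat_pow_minus1_dvd:
  fixes a :: nat assumes "a \<ge> 1"
  shows "(a - 1) dvd (a ^ d - 1)"
proof -
  have "(int a - 1) dvd (int a ^ d - 1)" by (simp add: power_diff_1_eq)
  moreover have "int (a - 1) = int a - 1" "int (a ^ d - 1) = int a ^ d - 1"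
    using assms by (simp_all add: of_nat_diff)
  ultimately show ?thesis by (metis int_dvd_int_iff)
qed

lemma nonzero_pow_card:
  fixes x :: "'a::{field,finite}"
  assumes "x \<noteq> 0"
  shows "x ^ (card (UNIV :: 'a set) - 1) = 1"
proof -
  have "card (UNIV - {0::'a}) = card (UNIV :: 'a set) - 1" by (simp add: card_Diff_subset)
  moreover have "x ^ card (UNIV - {0::'a}) = 1"
    by (rule pow_card_one) (use assms in auto)
  ultimately show ?thesis by simp
qed

lemma card_UNIV_ge2: "2 \<le> card (UNIV :: 'a::{field,finite} set)"
proof -
  have "card {0::'a, 1} \<le> card (UNIV :: 'a set)" by (rule card_mono) auto
  thus ?thesis by simp
qed

lemma card_subfield:
  assumes q2: "2 \<le> q" and N: "card (UNIV :: 'a::{field,finite} set) = q ^ n"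
    and j: "0 < j" "j dvd n"
  shows "card (subfield_of_order (q ^ j) :: 'a set) = q ^ j"
proof -
  obtain d where d: "n = j * d" using j by (auto elim: dvdE)
  have "q ^ 1 \<le> q ^ j" using q2 j by (intro power_increasing) auto
  hence R2: "2 \<le> q ^ j" using q2 by simp
  have "d \<noteq> 0" using d N card_UNIV_ge2[where ?'a='a] by (cases d) auto
  hence "q ^ j \<le> (q ^ j) ^ d" using R2 by (simp add: self_le_power)
  hence RN: "q ^ j \<le> q ^ n" by (simp add: d power_mult)
  have dv: "(q ^ j - 1) dvd (q ^ n - 1)" unfolding d power_mult
    by (rule nat_pow_minus1_dvd) (use R2 in simp)
  have c: "card {x::'a. x ^ (q ^ j - 1) = 1} = q ^ j - 1"
    by (rule card_roots_sub[OF N _ R2 RN dv]) (use nonzero_pow_card[where ?'a='a] N in metis)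
  have "subfield_of_order (q ^ j) = insert (0::'a) {x::'a. x ^ (q ^ j - 1) = 1}"
  proof -
    have "x ^ (q ^ j) = x \<longleftrightarrow> x = 0 \<or> x ^ (q ^ j - 1) = 1" for x :: 'a
    proof -
      have "x ^ (q ^ j) = x * x ^ (q ^ j - 1)" using R2 by (metis Suc_diff_1 le_trans one_le_numeral Suc_le_eq power_Suc zero_less_one)
      thus ?thesis using R2 by auto
    qed
    thus ?thesis unfolding subfield_of_order_def by auto
  qed
  moreover have "(0::'a) \<notin> {x::'a. x ^ (q ^ j - 1) = 1}" using R2 by (auto simp: power_0_left)
  ultimately show ?thesis using c R2 by simp
qed


lemma subfield_closed:
  assumes pc: "prime CHAR('a::{field,finite})" and Q: "Q = CHAR('a) ^ f"
  defines "S \<equiv> (subfield_of_order Q :: 'a set)"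
  shows "0 \<in> S" "1 \<in> S" "\<forall>a\<in>S. \<forall>b\<in>S. a + b \<in> S" "\<forall>a\<in>S. \<forall>b\<in>S. a - b \<in> S"
     "\<forall>a\<in>S. \<forall>b\<in>S. a * b \<in> S" "\<forall>a\<in>S. a \<noteq> 0 \<longrightarrow> inverse a \<in> S"
proof -
  have Qpos: "Q > 0" using Q pc by (simp add: prime_gt_0_nat)
  have fd: "(x + y) ^ Q = x ^ Q + y ^ Q" for x y :: 'a
    by (rule freshmans_dream'[OF pc Q])
  show "0 \<in> S" unfolding S_def subfield_of_order_def using Qpos by simp
  show "1 \<in> S" unfolding S_def subfield_of_order_def by simp
  show "\<forall>a\<in>S. \<forall>b\<in>S. a + b \<in> S" unfolding S_def subfield_of_order_def using fd by simp
  show "\<forall>a\<in>S. \<forall>b\<in>S. a - b \<in> S" unfolding S_def subfield_of_order_def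
  proof (intro ballI, simp)
    fix a b :: 'a assume "a ^ Q = a" "b ^ Q = b"
    have "(a - b) ^ Q + b ^ Q = a ^ Q" using fd[of "a - b" b] by simp
    thus "(a - b) ^ Q = a - b" using \<open>a ^ Q = a\<close> \<open>b ^ Q = b\<close> by (simp add: algebra_simps)
  qed
  show "\<forall>a\<in>S. \<forall>b\<in>S. a * b \<in> S" unfolding S_def subfield_of_order_def by (simp add: power_mult_distrib)
  show "\<forall>a\<in>S. a \<noteq> 0 \<longrightarrow> inverse a \<in> S" unfolding S_def subfield_of_order_def by (simp add: power_inverse)
qed

lemma add_closed_minus:
  fixes U :: "'a::{field,finite} set"
  assumes "0 \<in> U" "\<forall>x\<in>U. \<forall>y\<in>U. x + y \<in> U" "a \<in> U" "b \<in> U"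
  shows "a - b \<in> U"
proof -
  have sub: "(\<lambda>x. x + b) ` U \<subseteq> U" using assms by auto
  have "inj_on (\<lambda>x. x + b) U" by (auto intro: inj_onI)
  hence "card ((\<lambda>x. x + b) ` U) = card U" by (rule card_image)
  hence "(\<lambda>x. x + b) ` U = U" using sub by (intro card_subset_eq) auto
  hence "0 \<in> (\<lambda>x. x + b) ` U" using assms by simp
  then obtain x where "x \<in> U" "x + b = 0" by auto
  hence "-b \<in> U" by (metis add_eq_0_iff2)
  thus ?thesis using assms by (metis diff_conv_add_uminus)
qed

lemma mult_image_eq:
  fixes U :: "'a::{field,finite} set"
  assumes "c \<noteq> 0" "\<forall>u\<in>U. c * u \<in> U"
  shows "(\<lambda>u. u * c) ` U = U"
proof -
  have sub: "(\<lambda>u. u * c) ` U \<subseteq> U" using assms by (auto simp: mult.commute)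
  have "inj_on (\<lambda>u. u * c) U" using assms(1) by (auto intro: inj_onI)
  hence "card ((\<lambda>u. u * c) ` U) = card U" by (rule card_image)
  thus ?thesis using sub by (intro card_subset_eq) auto
qed


lemma stab_iff:
  fixes F :: "'a::{field,finite} set list" and q n m p k :: nat
  assumes p: "prime p" "0 < k" "q = p ^ k"
    and N: "card (UNIV :: 'a set) = q ^ n"
    and fl: "is_flag q F"
    and bf: "is_best_friend q n F m"
    and g: "\<gamma> \<noteq> 0"
  shows "flag_mult F \<gamma> = F \<longleftrightarrow> \<gamma> \<in> subfield_of_order (q ^ m)"
proof -
  define S :: "'a set" where "S = subfield_of_order (q ^ m)"
  define K :: "'a set" where "K = {c. \<forall>U\<in>set F. \<forall>u\<in>U. c * u \<in> U}"
  have fr: "is_friend q n F m" and best: "\<And>m'. is_friend q n F m' \<Longrightarrow> m' \<le> m"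
    using bf unfolding is_best_friend_def by auto
  have m: "0 < m" "m dvd n" and Ssub: "\<forall>U\<in>set F. is_subspace_over (q ^ m) U"
    using fr unfolding is_friend_def by auto
  have U0: "\<And>U. U \<in> set F \<Longrightarrow> 0 \<in> U" and Uadd: "\<And>U. U \<in> set F \<Longrightarrow> \<forall>x\<in>U. \<forall>y\<in>U. x + y \<in> U"
    using fl unfolding is_flag_def is_subspace_over_def by auto
  have "p ^ 1 \<le> p ^ k" using p prime_gt_1_nat[of p] by (intro power_increasing) auto
  hence q2: "2 \<le> q" using p prime_ge_2_nat[of p] by simp
  have charp: "CHAR('a) = p" using CHAR_eq_prime[OF p(1), of "k * n"] N p by (simp add: power_mult)
  have pc: "prime CHAR('a)" using charp p by simp
  have qpow: "\<And>j. q ^ j = CHAR('a) ^ (k * j)" using charp p by (simp add: power_mult)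
  note Scl = subfield_closed[OF pc qpow[of m], folded S_def]
  have SK: "S \<subseteq> K" using Ssub unfolding K_def S_def is_subspace_over_def by auto
  have Kcl: "0 \<in> K" "1 \<in> K" "\<forall>a\<in>K. \<forall>b\<in>K. a + b \<in> K" "\<forall>a\<in>K. \<forall>b\<in>K. a - b \<in> K"
     "\<forall>a\<in>K. \<forall>b\<in>K. a * b \<in> K" "\<forall>a\<in>K. a \<noteq> 0 \<longrightarrow> inverse a \<in> K"
  proof -
    show "0 \<in> K" "1 \<in> K" unfolding K_def using U0 by auto
    show "\<forall>a\<in>K. \<forall>b\<in>K. a + b \<in> K" unfolding K_def using Uadd by (simp add: distrib_right)
    show "\<forall>a\<in>K. \<forall>b\<in>K. a - b \<in> K" unfolding K_def
      using add_closed_minus[OF U0 Uadd] by (simp add: left_diff_distrib)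
    show "\<forall>a\<in>K. \<forall>b\<in>K. a * b \<in> K" unfolding K_def by (simp add: mult.assoc)
    show "\<forall>a\<in>K. a \<noteq> 0 \<longrightarrow> inverse a \<in> K"
    proof (intro ballI impI)
      fix a assume a: "a \<in> K" "a \<noteq> 0"
      show "inverse a \<in> K" unfolding K_def
      proof (intro CollectI ballI)
        fix U u assume U: "U \<in> set F" "u \<in> U"
        have "(\<lambda>u. u * a) ` U = U" using a U unfolding K_def by (intro mult_image_eq) auto
        then obtain w where "w \<in> U" "u = w * a" using U by blast
        moreover have "inverse a * (w * a) = w" using a(2) by (simp add: field_simps)
        ultimately show "inverse a * u \<in> U" by metis
      qed
    qed
  qed
  have KS: "K \<subseteq> S"
  proof -
    have "subsp S K" unfolding subsp_def using Kcl SK by blast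
    then obtain d where d: "card K = card S ^ d" using card_module_power[OF Scl] by blast
    have "subsp K UNIV" unfolding subsp_def by auto
    then obtain e where e: "card (UNIV::'a set) = card K ^ e" using card_module_power[OF Kcl] by blast
    have cS: "card S = q ^ m" unfolding S_def by (rule card_subfield[OF q2 N m])
    have "q ^ n = q ^ (m * d * e)" using N e d cS by (simp add: power_mult)
    hence ne: "n = m * d * e" using q2 by (simp add: power_inject_exp)
    have "card {0::'a,1} \<le> card K" using Kcl by (intro card_mono) auto
    hence "d \<noteq> 0" using d by (cases d) auto
    define m' where "m' = m * d"
    have m'pos: "0 < m'" "m' dvd n" using m \<open>d \<noteq> 0\<close> ne unfolding m'_def by auto
    have cK: "card K = q ^ m'" using d cS unfolding m'_def by (simp add: power_mult)
    have Ksub: "K \<subseteq> subfield_of_order (q ^ m')"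
    proof
      fix x assume x: "x \<in> K"
      show "x \<in> subfield_of_order (q ^ m')"
      proof (cases "x = 0")
        case True thus ?thesis unfolding subfield_of_order_def using q2 m'pos by (simp add: power_0_left)
      next
        case False
        have "x ^ card (K - {0}) = 1"
          by (rule pow_card_one) (use x False Kcl in \<open>auto simp: divide_inverse mult.commute\<close>)
        moreover have "card (K - {0}) = card K - 1" using Kcl by simp
        ultimately have "x ^ (card K - 1) = 1" by simp
        moreover have "card K = Suc (card K - 1)" using \<open>card {0::'a,1} \<le> card K\<close> by simp
        ultimately have "x ^ card K = x" by (metis power_Suc mult_1_right)
        thus ?thesis unfolding subfield_of_order_def using cK by simp
      qed
    qed
    have Keq: "K = subfield_of_order (q ^ m')"
      using Ksub card_subfield[OF q2 N m'pos] cK by (intro card_subset_eq) auto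
    have "\<forall>U\<in>set F. is_subspace_over (q ^ m') U"
    proof
      fix U assume U: "U \<in> set F"
      have "\<forall>c\<in>subfield_of_order (q ^ m'). \<forall>x\<in>U. c * x \<in> U"
        using U unfolding Keq[symmetric] K_def by blast
      thus "is_subspace_over (q ^ m') U" unfolding is_subspace_over_def using U0[OF U] Uadd[OF U] by blast
    qed
    hence "is_friend q n F m'" unfolding is_friend_def using m'pos by blast
    hence "m' \<le> m" by (rule best)
    hence "d = 1" using m \<open>d \<noteq> 0\<close> unfolding m'_def by (cases d) auto
    hence "card K = card S" using d by simp
    hence "S = K" using SK by (intro card_subset_eq) auto
    thus ?thesis by simp
  qed
  have "flag_mult F \<gamma> = F \<longleftrightarrow> (\<forall>U\<in>set F. (\<lambda>u. u * \<gamma>) ` U = U)"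
    unfolding flag_mult_def by (induction F) auto
  also have "\<dots> \<longleftrightarrow> \<gamma> \<in> K"
  proof
    assume h: "\<forall>U\<in>set F. (\<lambda>u. u * \<gamma>) ` U = U"
    show "\<gamma> \<in> K" unfolding K_def
    proof (intro CollectI ballI)
      fix U u assume "U \<in> set F" "u \<in> U"
      hence "u * \<gamma> \<in> U" using h by blast
      thus "\<gamma> * u \<in> U" by (simp add: mult.commute)
    qed
  next
    assume "\<gamma> \<in> K"
    thus "\<forall>U\<in>set F. (\<lambda>u. u * \<gamma>) ` U = U" unfolding K_def using g by (auto intro!: mult_image_eq[OF g])
  qed
  also have "\<dots> \<longleftrightarrow> \<gamma> \<in> S" using KS SK by auto
  finally show ?thesis unfolding S_def .
qed


lemma flag_mult_mult: "flag_mult (flag_mult F a) b = flag_mult F (a * b)"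
  unfolding flag_mult_def by (simp add: image_image mult.assoc)

lemma flag_mult_1: "flag_mult F 1 = F"
  unfolding flag_mult_def by (induction F) auto

lemma flag_mult_eq_iff:
  fixes a b :: "'a::{field,finite}"
  assumes "b \<noteq> 0"
  shows "flag_mult F a = flag_mult F b \<longleftrightarrow> flag_mult F (a / b) = F"
proof
  assume "flag_mult F a = flag_mult F b"
  hence "flag_mult (flag_mult F a) (inverse b) = flag_mult (flag_mult F b) (inverse b)" by simp
  thus "flag_mult F (a / b) = F" using assms by (simp add: flag_mult_mult divide_inverse flag_mult_1)
next
  assume "flag_mult F (a / b) = F"
  hence "flag_mult (flag_mult F (a / b)) b = flag_mult F b" by simp
  thus "flag_mult F a = flag_mult F b" using assms by (simp add: flag_mult_mult)
qed

lemma mult_order_props: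
  fixes \<beta> :: "'a::{field,finite}"
  assumes "\<beta> \<noteq> 0"
  shows "0 < mult_order \<beta>" "\<beta> ^ mult_order \<beta> = 1" "\<And>k. 0 < k \<Longrightarrow> k < mult_order \<beta> \<Longrightarrow> \<beta> ^ k \<noteq> 1"
proof -
  have ex: "\<exists>k. 0 < k \<and> \<beta> ^ k = 1"
    using nonzero_pow_card[OF assms] card_UNIV_ge2[where ?'a='a] by (intro exI[of _ "card (UNIV::'a set) - 1"]) auto
  show "0 < mult_order \<beta>" "\<beta> ^ mult_order \<beta> = 1"
    using LeastI_ex[OF ex] unfolding mult_order_def by auto
  show "\<And>k. 0 < k \<Longrightarrow> k < mult_order \<beta> \<Longrightarrow> \<beta> ^ k \<noteq> 1"
    unfolding mult_order_def using not_less_Least by blast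
qed

lemma pow_mod_order:
  fixes \<beta> :: "'a::{field,finite}"
  assumes "\<beta> \<noteq> 0"
  shows "\<beta> ^ j = \<beta> ^ (j mod mult_order \<beta>)"
proof -
  have "\<beta> ^ j = \<beta> ^ (mult_order \<beta> * (j div mult_order \<beta>) + j mod mult_order \<beta>)" by simp
  also have "\<dots> = (\<beta> ^ mult_order \<beta>) ^ (j div mult_order \<beta>) * \<beta> ^ (j mod mult_order \<beta>)"
    by (simp only: power_add power_mult)
  also have "\<dots> = \<beta> ^ (j mod mult_order \<beta>)"
    using mult_order_props(2)[OF assms] by simp
  finally show ?thesis .
qed

lemma pow_inj_order:
  fixes \<beta> :: "'a::{field,finite}"
  assumes "\<beta> \<noteq> 0"
  shows "inj_on (\<lambda>j. \<beta> ^ j) {..<mult_order \<beta>}"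
proof -
  have *: "\<beta> ^ i \<noteq> \<beta> ^ j" if "i < j" "j < mult_order \<beta>" for i j
  proof
    assume "\<beta> ^ i = \<beta> ^ j"
    moreover have "\<beta> ^ j = \<beta> ^ i * \<beta> ^ (j - i)" using that by (simp flip: power_add)
    ultimately have "\<beta> ^ i * \<beta> ^ (j - i) = \<beta> ^ i * 1" by simp
    hence "\<beta> ^ (j - i) = 1" using assms by simp
    thus False using mult_order_props(3)[OF assms, of "j - i"] that by simp
  qed
  show ?thesis
  proof (rule inj_onI)
    fix i j assume "i \<in> {..<mult_order \<beta>}" "j \<in> {..<mult_order \<beta>}" "\<beta> ^ i = \<beta> ^ j"
    thus "i = j" using *[of i j] *[of j i] by (cases i j rule: linorder_cases) auto
  qed
qed


lemma orbit_count:
  fixes F :: "'a::{field,finite} set list" and q n m p k :: nat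
  assumes p: "prime p" "0 < k" "q = p ^ k"
    and N: "card (UNIV :: 'a set) = q ^ n"
    and fl: "is_flag q F"
    and bf: "is_best_friend q n F m"
    and b: "\<beta> \<noteq> 0"
  shows "real (card (orbit_beta \<beta> F)) =
           real (mult_order \<beta>) / real (card (cyclic_subgroup \<beta> \<inter> (subfield_of_order (q ^ m) - {0})))"
proof -
  define S :: "'a set" where "S = subfield_of_order (q ^ m)"
  define r where "r = mult_order \<beta>"
  define P where "P j \<longleftrightarrow> \<beta> ^ j \<in> S" for j
  have stab: "\<And>\<gamma>. \<gamma> \<noteq> 0 \<Longrightarrow> flag_mult F \<gamma> = F \<longleftrightarrow> \<gamma> \<in> S"
    unfolding S_def by (rule stab_iff[OF p N fl bf])
  have fr: "is_friend q n F m" using bf unfolding is_best_friend_def by auto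
  have "p ^ 1 \<le> p ^ k" using p prime_gt_1_nat[of p] by (intro power_increasing) auto
  hence q2: "2 \<le> q" using p prime_ge_2_nat[of p] by simp
  have charp: "CHAR('a) = p" using CHAR_eq_prime[OF p(1), of "k * n"] N p by (simp add: power_mult)
  have pc: "prime CHAR('a)" using charp p by simp
  have qpow: "\<And>j. q ^ j = CHAR('a) ^ (k * j)" using charp p by (simp add: power_mult)
  note Scl = subfield_closed[OF pc qpow[of m], folded S_def]
  have rpos: "0 < r" and o1: "\<beta> ^ r = 1" unfolding r_def using mult_order_props[OF b] by auto
  have bj0: "\<And>j. \<beta> ^ j \<noteq> 0" using b by simp
  have Padd: "\<And>a c. P a \<Longrightarrow> P c \<Longrightarrow> P (a + c)" unfolding P_def using Scl by (simp add: power_add)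
  have Psub: "\<And>a c. P (a + c) \<Longrightarrow> P a \<Longrightarrow> P c"
  proof -
    fix a c assume "P (a + c)" "P a"
    hence "\<beta> ^ (a + c) * inverse (\<beta> ^ a) \<in> S" unfolding P_def using Scl bj0 by blast
    moreover have "\<beta> ^ (a + c) * inverse (\<beta> ^ a) = \<beta> ^ c" using bj0[of a] by (simp add: power_add)
    ultimately show "P c" unfolding P_def by simp
  qed
  have Po: "P r" unfolding P_def using o1 Scl by simp
  have exP: "\<exists>t. 0 < t \<and> P t" using Po rpos by blast
  define t where "t = (LEAST t. 0 < t \<and> P t)"
  have tpos: "0 < t" and Pt: "P t" using LeastI_ex[OF exP] unfolding t_def by auto
  have tmin: "\<And>j. 0 < j \<Longrightarrow> j < t \<Longrightarrow> \<not> P j" unfolding t_def using not_less_Least by blast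
  have Pmul: "P (t * i)" for i
    by (induction i) (auto simp: P_def Scl(2) intro: Padd[OF Pt, unfolded P_def])
  have Pdvd: "P j \<longleftrightarrow> t dvd j" for j
  proof
    assume "P j"
    have "j = t * (j div t) + j mod t" by simp
    hence "P (t * (j div t) + j mod t)" using \<open>P j\<close> by metis
    hence "P (j mod t)" using Psub Pmul by blast
    hence "j mod t = 0" using tmin[of "j mod t"] tpos by (metis mod_less_divisor neq0_conv)
    thus "t dvd j" by auto
  next
    assume "t dvd j" thus "P j" using Pmul by (auto elim: dvdE)
  qed
  have tdo: "t dvd r" using Pdvd Po by simp
  hence tle: "t \<le> r" using rpos by (simp add: dvd_imp_le)
  have feq: "flag_mult F (\<beta> ^ i) = flag_mult F (\<beta> ^ j) \<longleftrightarrow> i mod t = j mod t" for i j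
  proof -
    have *: "flag_mult F (\<beta> ^ i) = flag_mult F (\<beta> ^ j) \<longleftrightarrow> i mod t = j mod t" if "i \<le> j" for i j
    proof -
      have "flag_mult F (\<beta> ^ i) = flag_mult F (\<beta> ^ j) \<longleftrightarrow> flag_mult F (\<beta> ^ j / \<beta> ^ i) = F"
        using flag_mult_eq_iff[OF bj0[of i], of F "\<beta> ^ j"] by metis
      also have "\<beta> ^ j / \<beta> ^ i = \<beta> ^ (j - i)" using that b by (simp add: power_diff)
      also have "flag_mult F (\<beta> ^ (j - i)) = F \<longleftrightarrow> P (j - i)" unfolding P_def using stab bj0 by blast
      also have "\<dots> \<longleftrightarrow> i mod t = j mod t" using Pdvd mod_eq_dvd_iff_nat[OF that, of t] by metis
      finally show ?thesis .
    qed
    show ?thesis using *[of i j] *[of j i] by (cases "i \<le> j") auto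
  qed
  have orb: "orbit_beta \<beta> F = (\<lambda>j. flag_mult F (\<beta> ^ j)) ` {..<t}"
  proof
    show "orbit_beta \<beta> F \<subseteq> (\<lambda>j. flag_mult F (\<beta> ^ j)) ` {..<t}"
    proof
      fix X assume "X \<in> orbit_beta \<beta> F"
      then obtain j where "X = flag_mult F (\<beta> ^ j)" unfolding orbit_beta_def by blast
      moreover have "flag_mult F (\<beta> ^ j) = flag_mult F (\<beta> ^ (j mod t))" using feq by simp
      moreover have "j mod t < t" using tpos by simp
      ultimately show "X \<in> (\<lambda>j. flag_mult F (\<beta> ^ j)) ` {..<t}" by blast
    qed
    show "(\<lambda>j. flag_mult F (\<beta> ^ j)) ` {..<t} \<subseteq> orbit_beta \<beta> F"
      unfolding orbit_beta_def r_def[symmetric] using tle by auto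
  qed
  have "inj_on (\<lambda>j. flag_mult F (\<beta> ^ j)) {..<t}" by (rule inj_onI) (simp add: feq)
  hence c1: "card (orbit_beta \<beta> F) = t" unfolding orb by (simp add: card_image)
  have T: "cyclic_subgroup \<beta> \<inter> (S - {0}) = (\<lambda>i. \<beta> ^ (t * i)) ` {..<r div t}"
  proof
    show "cyclic_subgroup \<beta> \<inter> (S - {0}) \<subseteq> (\<lambda>i. \<beta> ^ (t * i)) ` {..<r div t}"
    proof
      fix x assume "x \<in> cyclic_subgroup \<beta> \<inter> (S - {0})"
      then obtain j where x: "x = \<beta> ^ j" "x \<in> S" unfolding cyclic_subgroup_def by blast
      have e: "\<beta> ^ j = \<beta> ^ (j mod r)" unfolding r_def by (rule pow_mod_order[OF b])
      hence "P (j mod r)" using x unfolding P_def by simp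
      hence "t dvd j mod r" using Pdvd by simp
      then obtain i where i: "j mod r = t * i" by (auto elim: dvdE)
      have "t * i < r" using i rpos by (metis mod_less_divisor)
      hence "i < r div t" using tdo tpos by (metis dvd_mult_div_cancel mult_less_cancel1)
      thus "x \<in> (\<lambda>i. \<beta> ^ (t * i)) ` {..<r div t}" using x e i by auto
    qed
    show "(\<lambda>i. \<beta> ^ (t * i)) ` {..<r div t} \<subseteq> cyclic_subgroup \<beta> \<inter> (S - {0})"
    proof
      fix x assume "x \<in> (\<lambda>i. \<beta> ^ (t * i)) ` {..<r div t}"
      then obtain i where "x = \<beta> ^ (t * i)" by blast
      moreover have "\<beta> ^ (t * i) \<in> S" using Pmul[of i] unfolding P_def .
      ultimately show "x \<in> cyclic_subgroup \<beta> \<inter> (S - {0})" unfolding cyclic_subgroup_def using bj0[of "t * i"] by auto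
    qed
  qed
  have "inj_on (\<lambda>i. \<beta> ^ (t * i)) {..<r div t}"
  proof (rule inj_onI)
    fix i j assume ij: "i \<in> {..<r div t}" "j \<in> {..<r div t}" "\<beta> ^ (t * i) = \<beta> ^ (t * j)"
    have "t * i < r" "t * j < r" using ij tdo tpos
      by (metis dvd_mult_div_cancel lessThan_iff mult_less_cancel1)+
    hence "t * i = t * j" using inj_onD[OF pow_inj_order[OF b], of "t * i" "t * j"] ij(3) unfolding r_def by simp
    thus "i = j" using tpos by simp
  qed
  hence c2: "card (cyclic_subgroup \<beta> \<inter> (S - {0})) = r div t" unfolding T by (simp add: card_image)
  have "r = t * (r div t)" using tdo by simp
  moreover have "r div t > 0" using tdo rpos tpos by (metis dvd_div_eq_0_iff neq0_conv)
  ultimately have "real r / real (r div t) = real t"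
    by (metis nonzero_mult_div_cancel_right of_nat_0_less_iff of_nat_mult order_less_irrefl)
  thus ?thesis using c1 c2 unfolding S_def r_def by simp
qed


theorem proposition4p1:
  fixes F :: "'a::{field,finite} set list" and \<beta> :: 'a and q n m :: nat
  assumes "\<exists>p k. prime p \<and> 0 < k \<and> q = p ^ k"
    and "card (UNIV :: 'a set) = q ^ n"
    and "is_flag q F"
    and "\<beta> \<noteq> 0"
    and "is_best_friend q n F m"
  shows "real (card (orbit_beta \<beta> F)) =
           real (mult_order \<beta>) / real (card (cyclic_subgroup \<beta> \<inter> (subfield_of_order (q ^ m) - {0}))) \<and>
         (mult_order \<beta> = q ^ n - 1 \<longrightarrow>
           real (card (orbit_full F)) = real (q ^ n - 1) / real (q ^ m - 1))"
proof -
  obtain p k where p: "prime p" "0 < k" "q = p ^ k" using assms(1) by blast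
  note part1 = orbit_count[OF p assms(2,3,5,4)]
  have part2: "real (card (orbit_full F)) = real (q ^ n - 1) / real (q ^ m - 1)"
    if ord: "mult_order \<beta> = q ^ n - 1"
  proof -
    have "p ^ 1 \<le> p ^ k" using p prime_gt_1_nat[of p] by (intro power_increasing) auto
    hence q2: "2 \<le> q" using p prime_ge_2_nat[of p] by simp
    have fr: "is_friend q n F m" using assms(5) unfolding is_best_friend_def by auto
    hence m: "0 < m" "m dvd n" unfolding is_friend_def by auto
    have cS: "card (subfield_of_order (q ^ m) :: 'a set) = q ^ m" by (rule card_subfield[OF q2 assms(2) m])
    have img: "(\<lambda>j. \<beta> ^ j) ` {..<mult_order \<beta>} = UNIV - {0}"
    proof (rule card_subset_eq)
      show "(\<lambda>j. \<beta> ^ j) ` {..<mult_order \<beta>} \<subseteq> UNIV - {0}" using assms(4) by auto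
      have "card ((\<lambda>j. \<beta> ^ j) ` {..<mult_order \<beta>}) = mult_order \<beta>"
        using card_image[OF pow_inj_order[OF assms(4)]] by simp
      thus "card ((\<lambda>j. \<beta> ^ j) ` {..<mult_order \<beta>}) = card (UNIV - {0::'a})"
        using ord assms(2) by (simp add: card_Diff_subset)
    qed auto
    have allpow: "\<And>\<gamma>. \<gamma> \<noteq> 0 \<Longrightarrow> \<exists>j<mult_order \<beta>. \<gamma> = \<beta> ^ j"
    proof -
      fix \<gamma> :: 'a assume "\<gamma> \<noteq> 0"
      hence "\<gamma> \<in> (\<lambda>j. \<beta> ^ j) ` {..<mult_order \<beta>}" using img by simp
      thus "\<exists>j<mult_order \<beta>. \<gamma> = \<beta> ^ j" by auto
    qed
    have "orbit_full F = orbit_beta \<beta> F"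
    proof
      show "orbit_full F \<subseteq> orbit_beta \<beta> F"
        unfolding orbit_full_def orbit_beta_def using allpow by blast
      show "orbit_beta \<beta> F \<subseteq> orbit_full F"
        unfolding orbit_full_def orbit_beta_def using assms(4) by auto
    qed
    moreover have "cyclic_subgroup \<beta> \<inter> (subfield_of_order (q ^ m) - {0}) = subfield_of_order (q ^ m) - {0}"
      unfolding cyclic_subgroup_def using allpow by blast
    moreover have "card (subfield_of_order (q ^ m) - {0::'a}) = q ^ m - 1"
    proof -
      have "(0::'a) \<in> subfield_of_order (q ^ m)" unfolding subfield_of_order_def using q2 by (simp add: power_0_left)
      thus ?thesis using cS by simp
    qed
    ultimately show ?thesis using part1 ord by simp
  qed
  show ?thesis using part1 part2 by blast
qed

end
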